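(* Let $\mathbb{K}$ be a field, $\frac12\le s<1$, and $d=\lceil sn\rceil<n$. Then for every fixed $0<p<1$, $$\mathbb{P}\big(Y\in Y_d(n,p): A_Y\text{ fails the WLP}\big)\ \ge\ \mathbb{P}\big(Y\in Y_d(n,p): \tilde H_d(Y;\mathbb{K})\neq0\big).$$
   Context: For $d\ge1$, $Y_d(n,p)$ is the probability space of simplicial complexes $Y$ on vertex set $[n]$ with $\Delta_n^{(d-1)}\subseteq Y\subseteq\Delta_n^{(d)}$, where $\Delta_n^{(k)}$ is the complex of all subsets of $[n]$ of size at most $k+1$, with $\mathbb{P}(Y)=p^{f_d}(1-p)^{\binom{n}{d+1}-f_d}$, $f_d$ being the number of $d$-dimensional faces of $Y$ (i.e. each $d$-face is included independently with probability $p$). $A_Y=\mathbb{K}[x_1,\dots,x_n]/(I_Y+(x_1^{d+2},\dots,x_n^{d+2}))$, where $I_Y$ is the Stanley–Reisner ideal of $Y$. An artinian graded algebra $A$ with top nonzero degree $D$ has the weak Lefschetz property (WLP) if there is a linear form $\ell$ with $\times\ell:A_i\to A_{i+1}$ of full rank for all $i<D$. *)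

theory Defs
  imports Complex_Main
begin

definition d_faces :: "nat \<Rightarrow> nat \<Rightarrow> nat set set" where
  "d_faces n d = {S. S \<subseteq> {1..n} \<and> card S = d + 1}"

text \<open>The complex with complete (d-1)-skeleton (all subsets of size at most d,
  including the empty face) together with the chosen set F of d-faces.\<close>
definition cplx :: "nat \<Rightarrow> nat \<Rightarrow> nat set set \<Rightarrow> nat set set" where
  "cplx n d F = {S. S \<subseteq> {1..n} \<and> card S \<le> d} \<union> F"

definition Yprob :: "nat \<Rightarrow> nat \<Rightarrow> real \<Rightarrow> (nat set set \<Rightarrow> bool) \<Rightarrow> real" where
  "Yprob n d p P =
     (\<Sum>F\<in>Pow (d_faces n d).
        if P (cplx n d F) then p ^ card F * (1 - p) ^ (card (d_faces n d) - card F) else 0)"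

section \<open>The artinian algebra A_Y = K[x_1..x_n]/(I_Y + (x_1^e,...,x_n^e))\<close>

text \<open>Monomial K-basis of the degree-i part: exponent vectors a supported in [n],
  with all exponents < e (not in (x_j^e)) and support a face of Y (not in I_Y).\<close>
definition SR_basis :: "nat \<Rightarrow> nat \<Rightarrow> nat set set \<Rightarrow> nat \<Rightarrow> (nat \<Rightarrow> nat) set" where
  "SR_basis n e Y i = {a. (\<forall>j. j \<notin> {1..n} \<longrightarrow> a j = 0) \<and> (\<forall>j. a j < e)
       \<and> {j. a j \<noteq> 0} \<in> Y \<and> (\<Sum>j\<in>{1..n}. a j) = i}"

text \<open>Elements of the degree-i part A_i, as coefficient functions on the basis.\<close>
definition elem_space :: "'k::field itself \<Rightarrow> nat \<Rightarrow> nat \<Rightarrow> nat set set \<Rightarrow> nat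
     \<Rightarrow> ((nat \<Rightarrow> nat) \<Rightarrow> 'k) set" where
  "elem_space K n e Y i = {f. \<forall>a. a \<notin> SR_basis n e Y i \<longrightarrow> f a = 0}"

text \<open>Multiplication by the linear form l = sum_j c_j x_j, as a map A_i -> A_(i+1).\<close>
definition mult_lin :: "nat \<Rightarrow> nat \<Rightarrow> nat set set \<Rightarrow> nat \<Rightarrow> (nat \<Rightarrow> 'k::field)
     \<Rightarrow> ((nat \<Rightarrow> nat) \<Rightarrow> 'k) \<Rightarrow> ((nat \<Rightarrow> nat) \<Rightarrow> 'k)" where
  "mult_lin n e Y i c f = (\<lambda>b. if b \<in> SR_basis n e Y (i + 1) then
      (\<Sum>j\<in>{j\<in>{1..n}. 0 < b j}.
          if b(j := b j - 1) \<in> SR_basis n e Y i then c j * f (b(j := b j - 1)) else 0)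
     else 0)"

text \<open>A linear map between finite-dimensional spaces has full rank iff it is
  injective or surjective.\<close>
definition full_rank_mult :: "'k::field itself \<Rightarrow> nat \<Rightarrow> nat \<Rightarrow> nat set set \<Rightarrow> nat
     \<Rightarrow> (nat \<Rightarrow> 'k) \<Rightarrow> bool" where
  "full_rank_mult K n e Y i c \<longleftrightarrow>
     (\<forall>f\<in>elem_space K n e Y i. mult_lin n e Y i c f = (\<lambda>_. 0) \<longrightarrow> f = (\<lambda>_. 0))
   \<or> (\<forall>g\<in>elem_space K n e Y (i + 1). \<exists>f\<in>elem_space K n e Y i. mult_lin n e Y i c f = g)"

definition top_deg :: "nat \<Rightarrow> nat \<Rightarrow> nat set set \<Rightarrow> nat" where
  "top_deg n e Y = Max {i. SR_basis n e Y i \<noteq> {}}"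

definition has_WLP :: "'k::field itself \<Rightarrow> nat \<Rightarrow> nat \<Rightarrow> nat set set \<Rightarrow> bool" where
  "has_WLP K n e Y \<longleftrightarrow> (\<exists>c :: nat \<Rightarrow> 'k. \<forall>i < top_deg n e Y. full_rank_mult K n e Y i c)"

text \<open>k-chains: K-valued functions on k-faces (card k+1), oriented by the vertex order.\<close>
definition chains :: "'k::field itself \<Rightarrow> nat set set \<Rightarrow> nat \<Rightarrow> (nat set \<Rightarrow> 'k) set" where
  "chains K Y k = {c. \<forall>\<sigma>. c \<sigma> \<noteq> 0 \<longrightarrow> \<sigma> \<in> Y \<and> card \<sigma> = k + 1}"

text \<open>Simplicial boundary of a k-chain (k \<ge> 1 gives a (k-1)-chain; for k = 0 it is the
  augmentation onto the empty face, giving reduced homology).\<close>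
definition boundary :: "nat set set \<Rightarrow> nat \<Rightarrow> (nat set \<Rightarrow> 'k::field) \<Rightarrow> (nat set \<Rightarrow> 'k)" where
  "boundary Y k c = (\<lambda>\<sigma>. if \<sigma> \<in> Y \<and> card \<sigma> = k then
      (\<Sum>v\<in>{v. v \<notin> \<sigma> \<and> insert v \<sigma> \<in> Y}. (-1) ^ card {u\<in>\<sigma>. u < v} * c (insert v \<sigma>))
     else 0)"

definition reduced_homology_nonzero :: "'k::field itself \<Rightarrow> nat set set \<Rightarrow> nat \<Rightarrow> bool" where
  "reduced_homology_nonzero K Y k \<longleftrightarrow>
     (\<exists>z\<in>chains K Y k. boundary Y k z = (\<lambda>_. 0)
        \<and> \<not> (\<exists>w\<in>chains K Y (k + 1). boundary Y (k + 1) w = z))"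

end

theory Submission
  imports Defs
begin

lemma dep_lemma:
  fixes w :: "'a \<Rightarrow> 'b \<Rightarrow> 'k::field"
  assumes "finite T" "finite S" "card T < card S" "\<forall>s\<in>S. \<forall>t. t \<notin> T \<longrightarrow> w s t = 0"
  shows "\<exists>l. (\<exists>s\<in>S. l s \<noteq> 0) \<and> (\<forall>t. (\<Sum>s\<in>S. l s * w s t) = 0)"
  using assms
proof (induction T arbitrary: S w rule: finite_induct)
  case empty
  then obtain s0 where s0: "s0 \<in> S" by fastforce
  let ?l = "\<lambda>s. if s = s0 then (1::'k) else 0"
  have "\<forall>t. (\<Sum>s\<in>S. ?l s * w s t) = 0"
  proof
    fix t
    have "(\<Sum>s\<in>S. ?l s * w s t) = (\<Sum>s\<in>S. if s = s0 then w s t else 0)"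
      by (rule sum.cong) auto
    also have "\<dots> = w s0 t" using s0 empty.prems(1) by simp
    also have "\<dots> = 0" using empty.prems(3) s0 by simp
    finally show "(\<Sum>s\<in>S. ?l s * w s t) = 0" .
  qed
  then show ?case using s0 by (intro exI[of _ ?l]) auto
next
  case (insert t1 T)
  show ?case
  proof (cases "\<forall>s\<in>S. w s t1 = 0")
    case True
    have "\<forall>s\<in>S. \<forall>t. t \<notin> T \<longrightarrow> w s t = 0"
      using True insert.prems(3) by (metis insertE)
    moreover have "card T < card S" using insert.prems(2) insert.hyps by simp
    ultimately show ?thesis using insert.IH insert.prems(1) by blast
  next
    case False
    then obtain s1 where s1: "s1 \<in> S" "w s1 t1 \<noteq> 0" by blast
    define S' where "S' = S - {s1}"
    define w' where "w' = (\<lambda>s t. w s t - (w s t1 / w s1 t1) * w s1 t)"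
    have fS': "finite S'" using insert.prems(1) S'_def by simp
    have cS': "card T < card S'"
      using insert.prems(2) insert.hyps s1(1) insert.prems(1) unfolding S'_def by simp
    have sup': "\<forall>s\<in>S'. \<forall>t. t \<notin> T \<longrightarrow> w' s t = 0"
    proof (intro ballI allI impI)
      fix s t assume s: "s \<in> S'" and t: "t \<notin> T"
      show "w' s t = 0"
      proof (cases "t = t1")
        case True then show ?thesis using s1(2) by (simp add: w'_def)
      next
        case False
        then have "w s t = 0" "w s1 t = 0" using s t s1(1) insert.prems(3) unfolding S'_def by auto
        then show ?thesis by (simp add: w'_def)
      qed
    qed
    obtain l' where l': "\<exists>s\<in>S'. l' s \<noteq> 0" "\<forall>t. (\<Sum>s\<in>S'. l' s * w' s t) = 0"
      using insert.IH[OF fS' cS' sup'] by blast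
    define l where "l = (\<lambda>s. if s = s1 then - (\<Sum>s\<in>S'. l' s * (w s t1 / w s1 t1)) else l' s)"
    have "\<forall>t. (\<Sum>s\<in>S. l s * w s t) = 0"
    proof
      fix t
      have "(\<Sum>s\<in>S. l s * w s t) = l s1 * w s1 t + (\<Sum>s\<in>S'. l s * w s t)"
        using s1(1) insert.prems(1) unfolding S'_def by (simp add: sum.remove)
      also have "(\<Sum>s\<in>S'. l s * w s t) = (\<Sum>s\<in>S'. l' s * w s t)"
        by (rule sum.cong) (auto simp: l_def S'_def)
      also have "l s1 * w s1 t = - (\<Sum>s\<in>S'. l' s * (w s t1 / w s1 t1) * w s1 t)"
        by (simp add: l_def sum_distrib_right)
      also have "- (\<Sum>s\<in>S'. l' s * (w s t1 / w s1 t1) * w s1 t) + (\<Sum>s\<in>S'. l' s * w s t)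
          = (\<Sum>s\<in>S'. l' s * w' s t)"
        by (simp add: w'_def sum_subtractf[symmetric] algebra_simps)
      also have "\<dots> = 0" using l'(2) by simp
      finally show "(\<Sum>s\<in>S. l s * w s t) = 0" .
    qed
    moreover have "\<exists>s\<in>S. l s \<noteq> 0" using l'(1) by (auto simp: l_def S'_def)
    ultimately show ?thesis by blast
  qed
qed

fun Pc :: "nat \<Rightarrow> nat \<Rightarrow> int \<Rightarrow> nat" where
  "Pc h 0 s = (if s = 0 then 1 else 0)"
| "Pc h (Suc t) s = (\<Sum>v\<in>{1..h}. Pc h t (s - int v))"

lemma Pc_sym: "Pc h t s = Pc h t (int t * (int h + 1) - s)"
proof (induction t arbitrary: s)
  case 0 then show ?case by simp
next
  case (Suc t)
  have "Pc h (Suc t) (int (Suc t) * (int h + 1) - s)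
      = (\<Sum>v\<in>{1..h}. Pc h t (int (Suc t) * (int h + 1) - s - int v))" by simp
  also have "\<dots> = (\<Sum>v\<in>{1..h}. Pc h t (s - int (h + 1 - v)))"
  proof (rule sum.cong[OF refl])
    fix v assume v: "v \<in> {1..h}"
    have "Pc h t (int (Suc t) * (int h + 1) - s - int v)
        = Pc h t (int t * (int h + 1) - (int (Suc t) * (int h + 1) - s - int v))"
      by (rule Suc.IH)
    also have "int t * (int h + 1) - (int (Suc t) * (int h + 1) - s - int v) = s - int (h + 1 - v)"
      using v by (simp add: algebra_simps of_nat_diff)
    finally show "Pc h t (int (Suc t) * (int h + 1) - s - int v) = Pc h t (s - int (h + 1 - v))" .
  qed
  also have "\<dots> = (\<Sum>v\<in>{1..h}. Pc h t (s - int v))"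
    by (rule sum.reindex_bij_witness[where i="\<lambda>v. h + 1 - v" and j="\<lambda>v. h + 1 - v"]) auto
  finally show ?case by simp
qed

lemma split_top: "1 \<le> h \<Longrightarrow> (\<Sum>v\<in>{1..h}. f (s + 1 - int v)) = f s + (\<Sum>v\<in>{1..h-1}. f (s - int v))"
proof (induction h)
  case 0 then show ?case by simp
next
  case (Suc h)
  show ?case
  proof (cases "h = 0")
    case True then show ?thesis by simp
  next
    case False
    then have "(\<Sum>v\<in>{1..Suc h}. f (s + 1 - int v)) = (\<Sum>v\<in>{1..h}. f (s + 1 - int v)) + f (s + 1 - int (Suc h))"
      by simp
    also have "\<dots> = f s + (\<Sum>v\<in>{1..h-1}. f (s - int v)) + f (s - int h)"
      using Suc.IH False by simp
    also have "\<dots> = f s + (\<Sum>v\<in>{1..Suc h - 1}. f (s - int v))"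
      using False by (cases h) (auto simp: add.assoc)
    finally show ?thesis .
  qed
qed

lemma split_bot: "1 \<le> h \<Longrightarrow> (\<Sum>v\<in>{1..h}. f (s - int v)) = (\<Sum>v\<in>{1..h-1}. f (s - int v)) + f (s - int h)"
  by (cases h) auto

lemma Pc_dec_step:
  assumes "1 \<le> h"
  shows "2 * s \<ge> int t * (int h + 1) \<Longrightarrow> Pc h t (s + 1) \<le> Pc h t s"
  and "2 * y \<ge> int t * (int h + 1) \<Longrightarrow> y \<le> x \<Longrightarrow> Pc h t x \<le> Pc h t y"
proof -
  have main: "\<forall>s. 2 * s \<ge> int t * (int h + 1) \<longrightarrow> Pc h t (s + 1) \<le> Pc h t s" for t
  proof (induction t)
    case 0 then show ?case by simp
  next
    case (Suc t)
    note IHt = Suc.IH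
    have mono: "Pc h t x \<le> Pc h t y" if "2 * y \<ge> int t * (int h + 1)" "y \<le> x" for x y
    proof -
      have "\<forall>k::nat. Pc h t (y + int k) \<le> Pc h t y"
      proof
        fix k :: nat show "Pc h t (y + int k) \<le> Pc h t y"
        proof (induction k)
          case 0 then show ?case by simp
        next
          case (Suc k)
          have "Pc h t (y + int k + 1) \<le> Pc h t (y + int k)"
            using that(1) IHt[rule_format, of "y + int k"] by simp
          moreover have "y + int (Suc k) = y + int k + 1" by simp
          ultimately show ?case using Suc.IH by (metis order_trans)
        qed
      qed
      from this[rule_format, of "nat (x - y)"] that(2) show ?thesis by simp
    qed
    show ?case
    proof (intro allI impI)
      fix s assume s: "int (Suc t) * (int h + 1) \<le> 2 * s"
      have key: "Pc h t s \<le> Pc h t (s - int h)"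
      proof (cases "int t * (int h + 1) \<le> 2 * (s - int h)")
        case True then show ?thesis using mono[of "s - int h" s] by simp
      next
        case False
        have "Pc h t (s - int h) = Pc h t (int t * (int h + 1) - (s - int h))" by (rule Pc_sym)
        moreover have "Pc h t s \<le> Pc h t (int t * (int h + 1) - (s - int h))"
          by (rule mono) (use False s in \<open>auto simp: algebra_simps\<close>)
        ultimately show ?thesis by simp
      qed
      have "Pc h (Suc t) (s + 1) = Pc h t s + (\<Sum>v\<in>{1..h-1}. Pc h t (s - int v))"
        using split_top[OF assms, of "Pc h t" s] by simp
      moreover have "Pc h (Suc t) s = (\<Sum>v\<in>{1..h-1}. Pc h t (s - int v)) + Pc h t (s - int h)"
        using split_bot[OF assms, of "Pc h t" s] by simp
      ultimately show "Pc h (Suc t) (s + 1) \<le> Pc h (Suc t) s" using key by simp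
    qed
  qed
  show "2 * s \<ge> int t * (int h + 1) \<Longrightarrow> Pc h t (s + 1) \<le> Pc h t s" using main by blast
  assume y: "2 * y \<ge> int t * (int h + 1)" "y \<le> x"
  have "\<forall>k::nat. Pc h t (y + int k) \<le> Pc h t y"
  proof
    fix k :: nat show "Pc h t (y + int k) \<le> Pc h t y"
    proof (induction k)
      case 0 then show ?case by simp
    next
      case (Suc k)
      have "Pc h t (y + int k + 1) \<le> Pc h t (y + int k)"
        using y(1) main[of t] by simp
      moreover have "y + int (Suc k) = y + int k + 1" by simp
      ultimately show ?case using Suc.IH by (metis order_trans)
    qed
  qed
  from this[rule_format, of "nat (x - y)"] y(2) show "Pc h t x \<le> Pc h t y" by simp
qed

lemma Pc_identity:
  assumes "2 * m = int (d + 1) * int (d + 2)" "d \<ge> 1"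
  shows "Pc (d+1) (d+1) m + Pc (d+1) d m = Pc (d+1) (d+1) (m - 1) + Pc (d+1) d (m - 1)"
proof -
  let ?f = "Pc (d+1) d"
  have "Pc (d+1) (d+1) m = ?f (m - 1) + (\<Sum>v\<in>{1..d}. ?f (m - 1 - int v))"
    using split_top[of "d+1" ?f "m - 1"] by simp
  moreover have "Pc (d+1) (d+1) (m - 1) = (\<Sum>v\<in>{1..d}. ?f (m - 1 - int v)) + ?f (m - 1 - int (d+1))"
    using split_bot[of "d+1" ?f "m - 1"] by simp
  moreover have "?f (m - 1 - int (d+1)) = ?f m"
  proof -
    have "?f (m - 1 - int (d+1)) = ?f (int d * (int (d+1) + 1) - (m - 1 - int (d+1)))" by (rule Pc_sym)
    also have "int d * (int (d+1) + 1) - (m - 1 - int (d+1)) = m"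
      using assms(1) by (simp add: algebra_simps)
    finally show ?thesis .
  qed
  ultimately show ?thesis by simp
qed

definition Vs :: "nat \<Rightarrow> nat set \<Rightarrow> int \<Rightarrow> (nat \<Rightarrow> nat) set" where
  "Vs h \<sigma> i = {a. (\<forall>j. j \<notin> \<sigma> \<longrightarrow> a j = 0) \<and> (\<forall>j\<in>\<sigma>. 1 \<le> a j \<and> a j \<le> h) \<and> (\<Sum>j\<in>\<sigma>. int (a j)) = i}"

lemma Vs_empty: "Vs h {} i = (if i = 0 then {\<lambda>_. 0} else {})"
  by (auto simp: Vs_def)

lemma Vs_insert:
  assumes "finite \<sigma>" "x \<notin> \<sigma>"
  shows "Vs h (insert x \<sigma>) i = (\<Union>v\<in>{1..h}. (\<lambda>a. a(x := v)) ` Vs h \<sigma> (i - int v))"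
proof (rule set_eqI, rule iffI)
  fix a assume a: "a \<in> Vs h (insert x \<sigma>) i"
  let ?v = "a x"
  have "a(x := 0) \<in> Vs h \<sigma> (i - int ?v)"
  proof -
    have "(\<Sum>j\<in>\<sigma>. int ((a(x:=0)) j)) = (\<Sum>j\<in>\<sigma>. int (a j))"
      using assms(2) by (intro sum.cong) auto
    moreover have "(\<Sum>j\<in>insert x \<sigma>. int (a j)) = int (a x) + (\<Sum>j\<in>\<sigma>. int (a j))"
      using assms by simp
    moreover have "(\<Sum>j\<in>insert x \<sigma>. int (a j)) = i" using a unfolding Vs_def by blast
    moreover have "\<forall>j. j \<notin> \<sigma> \<longrightarrow> (a(x:=0)) j = 0" using a unfolding Vs_def by auto
    moreover have "\<forall>j\<in>\<sigma>. 1 \<le> (a(x:=0)) j \<and> (a(x:=0)) j \<le> h" using a assms(2) unfolding Vs_def by auto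
    ultimately show ?thesis unfolding Vs_def by auto
  qed
  moreover have "a = (a(x := 0))(x := ?v)" by simp
  moreover have "?v \<in> {1..h}" using a unfolding Vs_def by auto
  ultimately show "a \<in> (\<Union>v\<in>{1..h}. (\<lambda>a. a(x := v)) ` Vs h \<sigma> (i - int v))" by blast
next
  fix a assume "a \<in> (\<Union>v\<in>{1..h}. (\<lambda>a. a(x := v)) ` Vs h \<sigma> (i - int v))"
  then obtain v b where v: "v \<in> {1..h}" and b: "b \<in> Vs h \<sigma> (i - int v)" and ab: "a = b(x := v)" by blast
  have "(\<Sum>j\<in>\<sigma>. int (a j)) = (\<Sum>j\<in>\<sigma>. int (b j))"
    using assms(2) ab by (intro sum.cong) auto
  moreover have "(\<Sum>j\<in>insert x \<sigma>. int (a j)) = int (a x) + (\<Sum>j\<in>\<sigma>. int (a j))"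
    using assms by simp
  ultimately show "a \<in> Vs h (insert x \<sigma>) i" using b v ab unfolding Vs_def by auto
qed

lemma card_Vs: "finite \<sigma> \<Longrightarrow> finite (Vs h \<sigma> i) \<and> card (Vs h \<sigma> i) = Pc h (card \<sigma>) i"
proof (induction \<sigma> arbitrary: i rule: finite_induct)
  case empty then show ?case by (simp add: Vs_empty)
next
  case (insert x \<sigma>)
  have inj: "inj_on (\<lambda>a. a(x := v)) (Vs h \<sigma> j)" for v j
  proof (rule inj_onI)
    fix a b assume "a \<in> Vs h \<sigma> j" "b \<in> Vs h \<sigma> j" "a(x := v) = b(x := v)"
    then have "a x = 0" "b x = 0" using insert.hyps(2) unfolding Vs_def by auto
    with \<open>a(x := v) = b(x := v)\<close> show "a = b" by (metis fun_upd_triv fun_upd_upd)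
  qed
  have fin: "\<forall>v\<in>{1..h}. finite ((\<lambda>a. a(x := v)) ` Vs h \<sigma> (i - int v))"
    using insert.IH by blast
  have disj: "\<forall>v\<in>{1..h}. \<forall>w\<in>{1..h}. v \<noteq> w \<longrightarrow>
      ((\<lambda>a. a(x := v)) ` Vs h \<sigma> (i - int v)) \<inter> ((\<lambda>a. a(x := w)) ` Vs h \<sigma> (i - int w)) = {}"
    by (auto dest: fun_cong[where x=x])
  have "card (Vs h (insert x \<sigma>) i) = (\<Sum>v\<in>{1..h}. card ((\<lambda>a. a(x := v)) ` Vs h \<sigma> (i - int v)))"
    unfolding Vs_insert[OF insert.hyps] by (rule card_UN_disjoint[OF finite_atLeastAtMost fin disj])
  also have "\<dots> = (\<Sum>v\<in>{1..h}. Pc h (card \<sigma>) (i - int v))"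
    using insert.IH by (intro sum.cong) (auto simp: card_image[OF inj])
  finally show ?case using insert.hyps fin by (simp add: Vs_insert)
qed

lemma Vs_supp: "a \<in> Vs h \<rho> i \<Longrightarrow> {j. a j \<noteq> 0} = \<rho>"
proof -
  assume a: "a \<in> Vs h \<rho> i"
  have A: "\<forall>j. j \<notin> \<rho> \<longrightarrow> a j = 0" and B: "\<forall>j\<in>\<rho>. 1 \<le> a j \<and> a j \<le> h"
    using a unfolding Vs_def by blast+
  show ?thesis
  proof (rule set_eqI)
    fix j show "j \<in> {j. a j \<noteq> 0} \<longleftrightarrow> j \<in> \<rho>"
      using A B by (cases "j \<in> \<rho>") auto
  qed
qed

lemma SR_eq_Vs:
  assumes "Y \<subseteq> Pow {1..n}"
  shows "SR_basis n (h+1) Y i = (\<Union>\<sigma>\<in>Y. Vs h \<sigma> (int i))"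
proof (rule set_eqI, rule iffI)
  fix a assume a: "a \<in> SR_basis n (h+1) Y i"
  let ?\<sigma> = "{j. a j \<noteq> 0}"
  have a1: "\<forall>j. j \<notin> {1..n} \<longrightarrow> a j = 0" and a2: "\<forall>j. a j < h + 1" and s: "?\<sigma> \<in> Y"
    and a4: "(\<Sum>j\<in>{1..n}. a j) = i"
    using a unfolding SR_basis_def by blast+
  have sub: "?\<sigma> \<subseteq> {1..n}" using s assms by blast
  have e1: "(\<Sum>j\<in>{1..n}. int (a j)) = (\<Sum>j\<in>?\<sigma>. int (a j))"
    using sub by (intro sum.mono_neutral_right) auto
  have e2: "(\<Sum>j\<in>{1..n}. int (a j)) = int i" using a4 by (metis of_nat_sum)
  have e: "(\<Sum>j\<in>?\<sigma>. int (a j)) = int i" using e1 e2 by simp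
  have B:  "\<forall>j\<in>?\<sigma>. 1 \<le> a j \<and> a j \<le> h"
  proof
    fix j assume "j \<in> ?\<sigma>"
    then have "a j \<noteq> 0" by simp
    moreover have "a j < h + 1" using a2 by blast
    ultimately show "1 \<le> a j \<and> a j \<le> h" by linarith
  qed
  have C: "\<forall>j. j \<notin> ?\<sigma> \<longrightarrow> a j = 0" by blast
  have "a \<in> Vs h ?\<sigma> (int i)" unfolding Vs_def using B C e by blast
  then show "a \<in> (\<Union>\<sigma>\<in>Y. Vs h \<sigma> (int i))" using s by blast
next
  fix a assume "a \<in> (\<Union>\<sigma>\<in>Y. Vs h \<sigma> (int i))"
  then obtain \<sigma> where s: "\<sigma> \<in> Y" and a: "a \<in> Vs h \<sigma> (int i)" by blast
  have sub: "\<sigma> \<subseteq> {1..n}" using s assms by blast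
  have supp: "{j. a j \<noteq> 0} = \<sigma>" using a by (rule Vs_supp)
  have A: "\<forall>j. j \<notin> \<sigma> \<longrightarrow> a j = 0" and B: "\<forall>j\<in>\<sigma>. 1 \<le> a j \<and> a j \<le> h"
    and C: "(\<Sum>j\<in>\<sigma>. int (a j)) = int i"
    using a unfolding Vs_def by blast+
  have "(\<Sum>j\<in>{1..n}. int (a j)) = (\<Sum>j\<in>\<sigma>. int (a j))"
    using sub A by (intro sum.mono_neutral_right) auto
  then have "int (\<Sum>j\<in>{1..n}. a j) = int i" using C by (metis of_nat_sum)
  then have "(\<Sum>j\<in>{1..n}. a j) = i" by linarith
  moreover have "\<forall>j. a j < h + 1"
  proof
    fix j show "a j < h + 1" using A B by (cases "j \<in> \<sigma>") auto
  qed
  moreover have "\<forall>j. j \<notin> {1..n} \<longrightarrow> a j = 0" using A sub by blast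
  ultimately show "a \<in> SR_basis n (h+1) Y i" using s supp unfolding SR_basis_def by simp
qed

lemma card_SR:
  assumes "Y \<subseteq> Pow {1..n}"
  shows "card (SR_basis n (h+1) Y i) = (\<Sum>\<sigma>\<in>Y. Pc h (card \<sigma>) (int i))"
proof -
  have fY: "finite Y" using assms by (meson finite_Pow_iff finite_atLeastAtMost finite_subset)
  have fs: "\<forall>\<sigma>\<in>Y. finite \<sigma>" using assms by (auto intro: finite_subset)
  have "card (\<Union>\<sigma>\<in>Y. Vs h \<sigma> (int i)) = (\<Sum>\<sigma>\<in>Y. card (Vs h \<sigma> (int i)))"
  proof (rule card_UN_disjoint[OF fY])
    show "\<forall>\<sigma>\<in>Y. finite (Vs h \<sigma> (int i))" using fs card_Vs by blast
    show "\<forall>\<sigma>\<in>Y. \<forall>\<tau>\<in>Y. \<sigma> \<noteq> \<tau> \<longrightarrow> Vs h \<sigma> (int i) \<inter> Vs h \<tau> (int i) = {}"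
    proof (intro ballI impI)
      fix \<sigma> \<tau> :: "nat set" assume "\<sigma> \<noteq> \<tau>"
      have "{j. a j \<noteq> 0} = \<rho>" if "a \<in> Vs h \<rho> (int i)" for a and \<rho> :: "nat set" using that by (rule Vs_supp)
      then show "Vs h \<sigma> (int i) \<inter> Vs h \<tau> (int i) = {}" using \<open>\<sigma> \<noteq> \<tau>\<close> by blast
    qed
  qed
  also have "\<dots> = (\<Sum>\<sigma>\<in>Y. Pc h (card \<sigma>) (int i))"
    using fs card_Vs by (intro sum.cong) auto
  finally show ?thesis using SR_eq_Vs[OF assms] by simp
qed

lemma cplx_sub: "F \<subseteq> d_faces n d \<Longrightarrow> cplx n d F \<subseteq> Pow {1..n}"
  by (auto simp: cplx_def d_faces_def)

lemma count_ineq: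
  assumes F: "F \<subseteq> d_faces n d" and d1: "1 \<le> d" and nd: "n \<le> 2 * d + 1"
    and m: "2 * m = (d + 1) * (d + 2)"
  shows "card (SR_basis n (d+2) (cplx n d F) m) \<le> card (SR_basis n (d+2) (cplx n d F) (m - 1))"
proof -
  define Sm where "Sm = {S. S \<subseteq> {1..n} \<and> card S < d}"
  define D where "D = {S. S \<subseteq> {1..n} \<and> card S = d}"
  have cp: "cplx n d F = (Sm \<union> D) \<union> F" unfolding cplx_def Sm_def D_def by auto
  have fSm: "finite Sm" unfolding Sm_def by (rule finite_subset[of _ "Pow {1..n}"]) auto
  have fD: "finite D" unfolding D_def by (rule finite_subset[of _ "Pow {1..n}"]) auto
  have fF: "finite F" using F unfolding d_faces_def by (rule finite_subset) auto
  have cardF: "\<forall>S\<in>F. card S = d + 1" using F unfolding d_faces_def by auto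
  have m1: "m \<ge> 1" using m d1 by (cases m) auto
  have sumY: "card (SR_basis n (d+2) (cplx n d F) i) =
      (\<Sum>\<sigma>\<in>Sm. Pc (d+1) (card \<sigma>) (int i)) + card D * Pc (d+1) d (int i) + card F * Pc (d+1) (d+1) (int i)" for i
  proof -
    have "card (SR_basis n ((d+1)+1) (cplx n d F) i) = (\<Sum>\<sigma>\<in>cplx n d F. Pc (d+1) (card \<sigma>) (int i))"
      by (rule card_SR[OF cplx_sub[OF F]])
    also have "\<dots> = (\<Sum>\<sigma>\<in>Sm \<union> D. Pc (d+1) (card \<sigma>) (int i)) + (\<Sum>\<sigma>\<in>F. Pc (d+1) (card \<sigma>) (int i))"
      unfolding cp using fSm fD fF cardF by (intro sum.union_disjoint) (auto simp: Sm_def D_def)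
    also have "(\<Sum>\<sigma>\<in>Sm \<union> D. Pc (d+1) (card \<sigma>) (int i)) = (\<Sum>\<sigma>\<in>Sm. Pc (d+1) (card \<sigma>) (int i)) + (\<Sum>\<sigma>\<in>D. Pc (d+1) (card \<sigma>) (int i))"
      using fSm fD by (intro sum.union_disjoint) (auto simp: Sm_def D_def)
    also have "(\<Sum>\<sigma>\<in>D. Pc (d+1) (card \<sigma>) (int i)) = (\<Sum>\<sigma>\<in>D. Pc (d+1) d (int i))"
      by (rule sum.cong) (auto simp: D_def)
    also have "\<dots> = card D * Pc (d+1) d (int i)" by simp
    also have "(\<Sum>\<sigma>\<in>F. Pc (d+1) (card \<sigma>) (int i)) = (\<Sum>\<sigma>\<in>F. Pc (d+1) (d+1) (int i))"
      by (rule sum.cong) (use cardF in auto)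
    also have "\<dots> = card F * Pc (d+1) (d+1) (int i)" by simp
    finally show ?thesis by (simp add: numeral_2_eq_2)
  qed
  have mm: "int (m - 1) = int m - 1" using m1 by simp
  have hm: "2 * int m = (int d + 1) * (int d + 2)"
  proof -
    have "int (2 * m) = int ((d + 1) * (d + 2))" using m by simp
    then show ?thesis by (simp only: of_nat_mult of_nat_add of_nat_numeral of_nat_1)
  qed
  have hm2: "2 * int m = int d * int d + 3 * int d + 2"
  proof -
    have "(int d + 1) * (int d + 2) = int d * int d + 3 * int d + 2" by (simp add: algebra_simps)
    then show ?thesis using hm by simp
  qed
  have ge: "2 * (int m - 1) \<ge> int t * (int (d+1) + 1)" if "t \<le> d" for t
  proof -
    have "int t * (int (d+1) + 1) \<le> int d * (int d + 2)" using that
      by (intro mult_mono) auto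
    also have "\<dots> \<le> 2 * (int m - 1)" using hm2 unfolding distrib_left right_diff_distrib by linarith
    finally show ?thesis .
  qed
  have dec: "Pc (d+1) t (int m) \<le> Pc (d+1) t (int m - 1)" if "t \<le> d" for t
    using Pc_dec_step(1)[where h="d+1" and s="int m - 1" and t=t] ge[OF that] by simp
  have A: "(\<Sum>\<sigma>\<in>Sm. Pc (d+1) (card \<sigma>) (int m)) \<le> (\<Sum>\<sigma>\<in>Sm. Pc (d+1) (card \<sigma>) (int m - 1))"
    by (intro sum_mono dec) (auto simp: Sm_def)
  have idt: "Pc (d+1) (d+1) (int m) + Pc (d+1) d (int m) = Pc (d+1) (d+1) (int m - 1) + Pc (d+1) d (int m - 1)"
    by (rule Pc_identity) (use hm d1 in \<open>simp_all add: add.commute\<close>)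
  have cD: "card D = n choose d"
    unfolding D_def using n_subsets[of "{1..n}" d] by simp
  have cF: "card F \<le> n choose (d+1)"
  proof -
    have "card F \<le> card (d_faces n d)" using F by (intro card_mono) (auto simp: d_faces_def)
    also have "card (d_faces n d) = n choose (d+1)"
      unfolding d_faces_def using n_subsets[of "{1..n}" "d+1"] by simp
    finally show ?thesis .
  qed
  have bin: "n choose (d+1) \<le> n choose d"
  proof -
    have "(d+1) * (n choose (d+1)) = (n - d) * (n choose d)"
      using times_binomial_minus1_eq[of "d+1" n] binomial_absorb_comp[of n d] by simp
    also have "\<dots> \<le> (d+1) * (n choose d)" using nd by (intro mult_right_mono) auto
    finally have X: "(d+1) * (n choose (d+1)) \<le> (d+1) * (n choose d)" .
    then show ?thesis by (metis Suc_eq_plus1 mult_le_cancel1 zero_less_Suc)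
  qed
  define x where "x = Pc (d+1) d (int m)"
  define x' where "x' = Pc (d+1) d (int m - 1)"
  define y where "y = Pc (d+1) (d+1) (int m)"
  define y' where "y' = Pc (d+1) (d+1) (int m - 1)"
  obtain g where g: "card D = card F + g" using cD cF bin le_Suc_ex by (metis order_trans)
  have xx: "x \<le> x'" unfolding x_def x'_def using dec[of d] by simp
  have yx: "y + x = y' + x'" using idt unfolding x_def x'_def y_def y'_def by simp
  have B: "card D * x + card F * y \<le> card D * x' + card F * y'"
  proof -
    have "card D * x + card F * y = g * x + card F * (x + y)" unfolding g by (simp add: distrib_left distrib_right)
    also have "\<dots> = g * x + card F * (x' + y')" using yx by (simp add: add.commute)
    also have "\<dots> \<le> g * x' + card F * (x' + y')" using xx by simp
    also have "\<dots> = card D * x' + card F * y'" unfolding g by (simp add: distrib_left distrib_right)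
    finally show ?thesis .
  qed
  show ?thesis using sumY[of m] sumY[of "m-1"] A B unfolding x_def x'_def y_def y'_def mm by simp
qed

lemma mult_lin_lin:
  fixes c :: "nat \<Rightarrow> 'k::field"
  assumes "f \<in> elem_space TYPE('k) n e Y i" and fin: "finite (SR_basis n e Y i)"
  shows "mult_lin n e Y i c f b = (\<Sum>s\<in>SR_basis n e Y i. f s * mult_lin n e Y i c (\<lambda>a. if a = s then 1 else 0) b)"
proof (cases "b \<in> SR_basis n e Y (i + 1)")
  case False then show ?thesis by (simp add: mult_lin_def)
next
  case True
  let ?J = "{j\<in>{1..n}. 0 < b j}"
  let ?SR = "SR_basis n e Y i"
  have "(\<Sum>s\<in>?SR. f s * mult_lin n e Y i c (\<lambda>a. if a = s then 1 else 0) b)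
      = (\<Sum>s\<in>?SR. \<Sum>j\<in>?J. f s * (if b(j := b j - 1) \<in> ?SR then c j * (if b(j := b j - 1) = s then 1 else 0) else 0))"
    using True by (simp add: mult_lin_def sum_distrib_left)
  also have "\<dots> = (\<Sum>j\<in>?J. \<Sum>s\<in>?SR. f s * (if b(j := b j - 1) \<in> ?SR then c j * (if b(j := b j - 1) = s then 1 else 0) else 0))"
    by (rule sum.swap)
  also have "\<dots> = (\<Sum>j\<in>?J. if b(j := b j - 1) \<in> ?SR then c j * f (b(j := b j - 1)) else 0)"
  proof (rule sum.cong[OF refl])
    fix j
    show "(\<Sum>s\<in>?SR. f s * (if b(j := b j - 1) \<in> ?SR then c j * (if b(j := b j - 1) = s then 1 else 0) else 0))
        = (if b(j := b j - 1) \<in> ?SR then c j * f (b(j := b j - 1)) else 0)"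
    proof (cases "b(j := b j - 1) \<in> ?SR")
      case True
      have "(\<Sum>s\<in>?SR. f s * (if b(j := b j - 1) \<in> ?SR then c j * (if b(j := b j - 1) = s then 1 else 0) else 0))
          = (\<Sum>s\<in>?SR. if s = b(j := b j - 1) then f s * c j else 0)"
        using True by (intro sum.cong) auto
      also have "\<dots> = f (b(j := b j - 1)) * c j"
        using True fin by (simp add: sum.delta' del: fun_upd_apply)
      finally show ?thesis using True by (simp add: mult.commute del: fun_upd_apply)
    qed simp
  qed
  also have "\<dots> = mult_lin n e Y i c f b" using True by (simp add: mult_lin_def)
  finally show ?thesis by simp
qed

lemma not_full_rank:
  fixes c :: "nat \<Rightarrow> 'k::field" and Phi :: "(nat \<Rightarrow> nat) \<Rightarrow> 'k"
  assumes fS: "finite (SR_basis n e Y i)" and fT: "finite (SR_basis n e Y (i+1))"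
  and card: "card (SR_basis n e Y (i+1)) \<le> card (SR_basis n e Y i)"
  and t0: "t0 \<in> SR_basis n e Y (i+1)" "Phi t0 \<noteq> 0"
  and orth: "\<forall>f\<in>elem_space TYPE('k) n e Y i.
      (\<Sum>t\<in>SR_basis n e Y (i+1). Phi t * mult_lin n e Y i c f t) = 0"
  shows "\<not> full_rank_mult TYPE('k) n e Y i c"
proof -
  let ?S = "SR_basis n e Y i" and ?T = "SR_basis n e Y (i+1)"
  have zero_out: "mult_lin n e Y i c f t = 0" if "t \<notin> ?T" for f t
    using that by (simp add: mult_lin_def)
  have red: "(\<Sum>t\<in>?T. Phi t * g t) = Phi t0 * g t0" if "\<forall>t. t \<noteq> t0 \<longrightarrow> g t = 0" for g
  proof -
    have "(\<Sum>t\<in>?T. Phi t * g t) = (\<Sum>t\<in>?T. if t = t0 then Phi t * g t else 0)"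
      using that by (intro sum.cong) auto
    also have "\<dots> = Phi t0 * g t0" using t0(1) fT by (simp add: sum.delta')
    finally show ?thesis .
  qed
  have nsurj: "\<not> (\<forall>g\<in>elem_space TYPE('k) n e Y (i + 1). \<exists>f\<in>elem_space TYPE('k) n e Y i. mult_lin n e Y i c f = g)"
  proof
    assume A: "\<forall>g\<in>elem_space TYPE('k) n e Y (i + 1). \<exists>f\<in>elem_space TYPE('k) n e Y i. mult_lin n e Y i c f = g"
    let ?g = "\<lambda>b. if b = t0 then (1::'k) else 0"
    have "?g \<in> elem_space TYPE('k) n e Y (i + 1)" using t0(1) by (auto simp: elem_space_def)
    then obtain f where f: "f \<in> elem_space TYPE('k) n e Y i" "mult_lin n e Y i c f = ?g" using A by blast
    have "(\<Sum>t\<in>?T. Phi t * mult_lin n e Y i c f t) = Phi t0 * ?g t0"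
      unfolding f(2) by (rule red) simp
    then show False using orth f(1) t0(2) by simp
  qed
  have ninj: "\<not> (\<forall>f\<in>elem_space TYPE('k) n e Y i. mult_lin n e Y i c f = (\<lambda>_. 0) \<longrightarrow> f = (\<lambda>_. 0))"
  proof -
    define w where "w = (\<lambda>s t. if t = t0 then 0 else mult_lin n e Y i c (\<lambda>a. if a = s then (1::'k) else 0) t)"
    have "card (?T - {t0}) < card ?S" using card t0(1) fT
      by (metis card_Diff1_less dual_order.strict_trans1)
    moreover have "\<forall>s\<in>?S. \<forall>t. t \<notin> ?T - {t0} \<longrightarrow> w s t = 0"
      using zero_out by (auto simp: w_def)
    ultimately obtain l where l: "\<exists>s\<in>?S. l s \<noteq> 0" "\<forall>t. (\<Sum>s\<in>?S. l s * w s t) = 0"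
      using dep_lemma[of "?T - {t0}" ?S w] fT fS by blast
    define f where "f = (\<lambda>a. if a \<in> ?S then l a else 0)"
    have fE: "f \<in> elem_space TYPE('k) n e Y i" by (simp add: f_def elem_space_def)
    have fnz: "f \<noteq> (\<lambda>_. 0)" using l(1) by (auto simp: f_def fun_eq_iff)
    have ml: "mult_lin n e Y i c f t = (\<Sum>s\<in>?S. l s * mult_lin n e Y i c (\<lambda>a. if a = s then 1 else 0) t)" for t
      using mult_lin_lin[OF fE fS, of c t] by (simp add: f_def)
    have other: "\<forall>t. t \<noteq> t0 \<longrightarrow> mult_lin n e Y i c f t = 0"
    proof (intro allI impI)
      fix t assume "t \<noteq> t0"
      then have "(\<Sum>s\<in>?S. l s * w s t) = (\<Sum>s\<in>?S. l s * mult_lin n e Y i c (\<lambda>a. if a = s then 1 else 0) t)"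
        by (simp add: w_def)
      then show "mult_lin n e Y i c f t = 0" using l(2) ml by simp
    qed
    have "Phi t0 * mult_lin n e Y i c f t0 = 0"
      using red[OF other] orth fE by simp
    then have "mult_lin n e Y i c f t0 = 0" using t0(2) by simp
    then have "mult_lin n e Y i c f = (\<lambda>_. 0)" using other by auto
    then show ?thesis using fE fnz by blast
  qed
  show ?thesis using nsurj ninj unfolding full_rank_mult_def by blast
qed

definition supp :: "(nat \<Rightarrow> nat) \<Rightarrow> nat set" where "supp a = {j. a j \<noteq> 0}"

definition isperm :: "nat \<Rightarrow> (nat \<Rightarrow> nat) \<Rightarrow> bool" where
  "isperm d a \<longleftrightarrow> finite (supp a) \<and> card (supp a) = d + 1 \<and> inj_on a (supp a) \<and> (\<forall>j. a j \<le> d + 1)"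

definition topS :: "nat set \<Rightarrow> (nat \<Rightarrow> nat) \<Rightarrow> bool" where
  "topS S a \<longleftrightarrow> (\<forall>k\<in>S. \<forall>j. a j \<noteq> 0 \<longrightarrow> j \<notin> S \<longrightarrow> a j < a k)"

definition invset :: "(nat \<Rightarrow> nat) \<Rightarrow> (nat \<times> nat) set" where
  "invset a = {(u, v). u \<in> supp a \<and> v \<in> supp a \<and> u < v \<and> a v < a u}"

definition invs :: "(nat \<Rightarrow> nat) \<Rightarrow> nat" where "invs a = card (invset a)"

definition Wt :: "nat \<Rightarrow> nat \<Rightarrow> (nat \<Rightarrow> 'k::field) \<Rightarrow> (nat \<Rightarrow> nat) \<Rightarrow> 'k" where
  "Wt n d c a = (\<Prod>k\<in>{k\<in>{1..n}. c k \<noteq> 0}. c k ^ (d + 1 - a k))"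

lemma finite_invset: "finite (supp a) \<Longrightarrow> finite (invset a)"
  unfolding invset_def by (rule finite_subset[of _ "supp a \<times> supp a"]) auto

lemma W_step:
  fixes c :: "nat \<Rightarrow> 'k::field"
  assumes "j \<in> {1..n}" "c j \<noteq> 0" "a j \<le> d"
  shows "c j * Wt n d c (a(j := a j + 1)) = Wt n d c a"
proof -
  define K where "K = {k\<in>{1..n}. c k \<noteq> 0}"
  have jK: "j \<in> K" using assms by (simp add: K_def)
  have fK: "finite K" by (simp add: K_def)
  have W: "Wt n d c x = (\<Prod>k\<in>K. c k ^ (d + 1 - x k))" for x unfolding Wt_def K_def by (rule refl)
  have "Wt n d c (a(j := a j + 1)) = c j ^ (d + 1 - (a(j := a j + 1)) j) * (\<Prod>k\<in>K - {j}. c k ^ (d + 1 - (a(j := a j + 1)) k))"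
    unfolding W by (rule prod.remove[OF fK jK])
  also have "(\<Prod>k\<in>K - {j}. c k ^ (d + 1 - (a(j := a j + 1)) k)) = (\<Prod>k\<in>K - {j}. c k ^ (d + 1 - a k))"
    by (rule prod.cong) auto
  also have "c j ^ (d + 1 - (a(j := a j + 1)) j) = c j ^ (d - a j)" by simp
  finally have A: "Wt n d c (a(j := a j + 1)) = c j ^ (d - a j) * (\<Prod>k\<in>K - {j}. c k ^ (d + 1 - a k))" .
  have B: "Wt n d c a = c j ^ (d + 1 - a j) * (\<Prod>k\<in>K - {j}. c k ^ (d + 1 - a k))"
    unfolding W by (rule prod.remove[OF fK jK])
  have "d + 1 - a j = Suc (d - a j)" using assms(3) by simp
  then show ?thesis using A B by (simp add: mult.assoc)
qed

lemma Wt_nz: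
  fixes c :: "nat \<Rightarrow> 'k::field"
  shows "Wt n d c a \<noteq> 0"
  unfolding Wt_def by (subst prod_zero_iff) auto

lemma swap_invs:
  assumes fin: "finite (supp b)" and inj: "inj_on b (supp b)"
    and ii: "i \<in> supp b" "i' \<in> supp b" "i \<noteq> i'" and w: "b i = Suc (b i')"
  shows "(-1::'k::field) ^ invs (b(i := b i', i' := b i)) = - ((-1) ^ invs b)"
proof -
  let ?b' = "b(i := b i', i' := b i)"
  have sb: "supp ?b' = supp b" using ii w unfolding supp_def by auto
  define p0 where "p0 = (min i i', max i i')"
  have same: "(u, v) \<in> invset ?b' \<longleftrightarrow> (u, v) \<in> invset b" if "(u, v) \<noteq> p0" for u v
  proof -
    have vals: "x \<in> supp b \<longrightarrow> x \<noteq> i \<longrightarrow> x \<noteq> i' \<longrightarrow> b x \<noteq> b i \<and> b x \<noteq> b i'" for x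
      using inj ii unfolding inj_on_def by metis
    show ?thesis
      using that vals[of u] vals[of v] w ii unfolding invset_def sb p0_def
      by (cases "u = i"; cases "u = i'"; cases "v = i"; cases "v = i'") (auto simp: min_def max_def)
  qed
  have p0: "p0 \<in> invset ?b' \<longleftrightarrow> p0 \<notin> invset b"
    using ii w unfolding invset_def sb p0_def by (auto simp: min_def max_def)
  have f1: "finite (invset b)" "finite (invset ?b')" using fin sb finite_invset by auto
  have eqQ: "invset ?b' - {p0} = invset b - {p0}" using same by auto
  show ?thesis
  proof (cases "p0 \<in> invset b")
    case True
    then have "invs b = Suc (invs ?b')"
      unfolding invs_def using p0 eqQ f1 by (metis Diff_empty Diff_insert0 card_Suc_Diff1)
    then show ?thesis by simp
  next
    case False
    then have "invs ?b' = Suc (invs b)"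
      unfolding invs_def using p0 eqQ f1 by (metis Diff_empty Diff_insert0 card_Suc_Diff1)
    then show ?thesis by simp
  qed
qed

lemma new_invs:
  assumes fin: "finite (supp a)" and j: "j \<notin> supp a" and big: "\<forall>u\<in>supp a. 2 \<le> a u"
  shows "invs (a(j := 1)) = invs a + card {u\<in>supp a. u < j}"
proof -
  have s: "supp (a(j := 1)) = insert j (supp a)" unfolding supp_def by auto
  have aj: "a j = 0" using j unfolding supp_def by simp
  have big': "Suc 0 < a u" if "0 < a u" for u
  proof -
    have "u \<in> supp a" using that by (simp add: supp_def)
    then have "2 \<le> a u" using big by blast
    then show ?thesis by simp
  qed
  have eq: "invset (a(j := 1)) = invset a \<union> (\<lambda>u. (u, j)) ` {u\<in>supp a. u < j}"
  proof (rule set_eqI)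
    fix p :: "nat \<times> nat"
    obtain u v where p: "p = (u, v)" by (cases p)
    show "p \<in> invset (a(j := 1)) \<longleftrightarrow> p \<in> invset a \<union> (\<lambda>u. (u, j)) ` {u\<in>supp a. u < j}"
      unfolding p invset_def s using j aj by (cases "u = j"; cases "v = j") (auto simp: supp_def big')
  qed
  have disj: "invset a \<inter> (\<lambda>u. (u, j)) ` {u\<in>supp a. u < j} = {}"
    using j unfolding invset_def by auto
  have "card (invset (a(j := 1))) = card (invset a) + card ((\<lambda>u. (u, j)) ` {u\<in>supp a. u < j})"
    unfolding eq using finite_invset[OF fin] fin disj by (intro card_Un_disjoint) auto
  also have "card ((\<lambda>u. (u, j)) ` {u\<in>supp a. u < j}) = card {u\<in>supp a. u < j}"
    by (rule card_image) (auto simp: inj_on_def)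
  finally show ?thesis unfolding invs_def .
qed

locale cyc =
  fixes n d :: nat and F :: "nat set set" and c :: "nat \<Rightarrow> 'k::field" and z :: "nat set \<Rightarrow> 'k" and S :: "nat set"
  assumes F: "F \<subseteq> d_faces n d"
  and zch: "z \<in> chains TYPE('k) (cplx n d F) d"
  and zb: "boundary (cplx n d F) d z = (\<lambda>_. 0)"
  and SZ: "\<forall>k\<in>S. k \<in> {1..n} \<and> c k = 0"
  and Smax: "\<And>k \<sigma>. k \<in> {1..n} \<Longrightarrow> c k = 0 \<Longrightarrow> k \<notin> S \<Longrightarrow> z \<sigma> \<noteq> 0 \<Longrightarrow> \<not> insert k S \<subseteq> \<sigma>"
begin

definition Phi :: "(nat \<Rightarrow> nat) \<Rightarrow> 'k" where
  "Phi a = (if isperm d a \<and> S \<subseteq> supp a \<and> topS S a then (-1) ^ invs a * z (supp a) * Wt n d c a else 0)"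

lemma z_nz: assumes "z \<sigma> \<noteq> 0" shows "\<sigma> \<in> F" "\<sigma> \<subseteq> {1..n}" "card \<sigma> = d + 1"
proof -
  have "\<sigma> \<in> cplx n d F \<and> card \<sigma> = d + 1" using zch assms unfolding chains_def by blast
  then show "\<sigma> \<in> F" "card \<sigma> = d + 1" unfolding cplx_def by auto
  then show "\<sigma> \<subseteq> {1..n}" using F unfolding d_faces_def by auto
qed

lemma S_in: assumes "z \<sigma> \<noteq> 0" "S \<subseteq> \<sigma>" "k \<in> \<sigma>" "c k = 0" shows "k \<in> S"
proof (rule ccontr)
  assume "k \<notin> S"
  moreover have "k \<in> {1..n}" using z_nz(2)[OF assms(1)] assms(3) by auto
  ultimately show False using Smax[of k \<sigma>] assms by auto
qed

lemma Phi_nz: assumes "Phi b \<noteq> 0"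
  shows "isperm d b" "S \<subseteq> supp b" "topS S b" "z (supp b) \<noteq> 0"
    "Phi b = (-1) ^ invs b * z (supp b) * Wt n d c b"
  using assms unfolding Phi_def by (auto split: if_splits)

lemma supp_inc: "supp (a(j := a j + 1)) = insert j (supp a)"
  unfolding supp_def by auto

lemma orth_pt:
  assumes sa: "supp a \<subseteq> {1..n}"
  shows "(\<Sum>j\<in>{1..n}. c j * Phi (a(j := a j + 1))) = 0"
proof -
  have fa: "finite (supp a)" using sa by (rule finite_subset) simp
  have card_inc: "card (supp (a(j := a j + 1))) = (if j \<in> supp a then card (supp a) else card (supp a) + 1)" for j
    unfolding supp_inc using fa by (simp add: insert_absorb)
  consider (A) "card (supp a) = d + 1" | (B) "card (supp a) = d" | (C) "card (supp a) \<noteq> d + 1" "card (supp a) \<noteq> d"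
    by blast
  then show ?thesis
  proof cases
    case C
    have "Phi (a(j := a j + 1)) = 0" for j
    proof (rule ccontr)
      assume "Phi (a(j := a j + 1)) \<noteq> 0"
      then have "card (supp (a(j := a j + 1))) = d + 1" using Phi_nz(1) unfolding isperm_def by blast
      then show False using C card_inc[of j] by (auto split: if_splits)
    qed
    then show ?thesis by simp
  next
    case A
    define \<sigma> where "\<sigma> = supp a"
    show ?thesis
    proof (cases "\<forall>j\<in>{1..n}. c j * Phi (a(j := a j + 1)) = 0")
      case True then show ?thesis by (intro sum.neutral) blast
    next
      case False
      then obtain i where i: "i \<in> {1..n}" "c i * Phi (a(i := a i + 1)) \<noteq> 0" by blast
      define b where "b = a(i := a i + 1)"
      have ci: "c i \<noteq> 0" and Pb: "Phi b \<noteq> 0" using i(2) unfolding b_def by auto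
      have iS: "i \<notin> S" using SZ ci by auto
      have pb: "isperm d b" "S \<subseteq> supp b" "topS S b" "z (supp b) \<noteq> 0"
        "Phi b = (-1) ^ invs b * z (supp b) * Wt n d c b" using Phi_nz[OF Pb] by auto
      have isig: "i \<in> \<sigma>"
      proof (rule ccontr)
        assume "i \<notin> \<sigma>"
        then have "card (supp b) = d + 2" using card_inc[of i] A unfolding b_def \<sigma>_def by simp
        then show False using pb(1) unfolding isperm_def by simp
      qed
      have sb: "supp b = \<sigma>" unfolding b_def \<sigma>_def supp_inc using isig \<sigma>_def by auto
      have fs: "finite \<sigma>" using fa \<sigma>_def by simp
      have injb: "inj_on b \<sigma>" and bnd: "\<forall>j. b j \<le> d + 1" using pb(1) sb unfolding isperm_def by auto
      have bi: "b i = a i + 1" unfolding b_def by simp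
      have ai1: "a i \<ge> 1" using isig unfolding \<sigma>_def supp_def by simp
      have img: "b ` \<sigma> = {1..d+1}"
      proof (rule card_subset_eq)
        show "finite {1..d+1}" by simp
        show "b ` \<sigma> \<subseteq> {1..d+1}" using bnd sb unfolding supp_def by (auto simp: Suc_le_eq)
        show "card (b ` \<sigma>) = card {1..d+1}" using card_image[OF injb] A \<sigma>_def by simp
      qed
      have "a i \<in> {1..d+1}" using ai1 bnd[rule_format, of i] bi by simp
      then obtain i' where i': "i' \<in> \<sigma>" "b i' = a i" using img by (metis imageE)
      have ii': "i \<noteq> i'" using i'(2) bi by auto
      have ai': "a i' = a i" using i' ii' unfolding b_def by simp
      have i'n: "i' \<in> {1..n}" using z_nz(2)[OF pb(4)] sb i'(1) by auto
      have ci': "c i' \<noteq> 0"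
      proof
        assume "c i' = 0"
        then have "i' \<in> S" using S_in[OF pb(4) pb(2)] i'(1) sb by auto
        moreover have "b i \<noteq> 0" using bi by simp
        ultimately have "b i < b i'" using pb(3) iS unfolding topS_def by blast
        then show False using i'(2) bi by simp
      qed
      have i'S: "i' \<notin> S" using SZ ci' by auto
      define b' where "b' = a(i' := a i' + 1)"
      have b'eq: "b' = b(i := b i', i' := b i)"
        unfolding b'_def b_def using ii' ai' i'(2) by (auto simp: fun_eq_iff)
      have sb': "supp b' = \<sigma>" unfolding b'_def \<sigma>_def supp_inc using i'(1) \<sigma>_def by auto
      have invsw: "(-1::'k) ^ invs b' = - ((-1) ^ invs b)"
        unfolding b'eq by (rule swap_invs) (use fs sb injb isig i'(1) ii' i'(2) bi in auto)
      have injb': "inj_on b' \<sigma>"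
        unfolding b'eq using injb isig i'(1) ii' unfolding inj_on_def by auto
      have pb': "isperm d b'"
        unfolding isperm_def using sb' fs A \<sigma>_def injb' bnd unfolding b'eq by auto
      have tb': "topS S b'"
        unfolding topS_def
      proof (intro ballI allI impI)
        fix k j assume k: "k \<in> S" and j: "b' j \<noteq> 0" "j \<notin> S"
        have ki: "k \<noteq> i" "k \<noteq> i'" using k iS i'S by auto
        then have bk: "b' k = b k" unfolding b'eq by simp
        have bj0: "b j \<noteq> 0"
        proof -
          have "j \<in> supp b'" using j(1) unfolding supp_def by simp
          then show ?thesis using sb sb' unfolding supp_def by auto
        qed
        have lt: "b j < b k" if "b j \<noteq> 0" "j \<notin> S" for j using pb(3) k that unfolding topS_def by blast
        have bi0: "b i \<noteq> 0" using bi by simp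
        show "b' j < b' k"
        proof (cases "j = i")
          case True then show ?thesis using lt[OF bi0 iS] bk unfolding b'eq using ii' i'(2) bi by simp
        next
          case False
          show ?thesis
          proof (cases "j = i'")
            case True then show ?thesis using lt[OF bi0 iS] bk unfolding b'eq by simp
          next
            case False
            then show ?thesis using \<open>j \<noteq> i\<close> lt[OF bj0 j(2)] bk unfolding b'eq by simp
          qed
        qed
      qed
      have Sb': "S \<subseteq> supp b'" using pb(2) sb sb' by simp
      have Pb': "Phi b' = (-1) ^ invs b' * z \<sigma> * Wt n d c b'"
        unfolding Phi_def using pb' Sb' tb' sb' by simp
      have Wi: "c i * Wt n d c b = Wt n d c a"
        unfolding b_def by (rule W_step) (use i ci bnd[rule_format, of i] bi in \<open>auto\<close>)
      have Wi': "c i' * Wt n d c b' = Wt n d c a"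
        unfolding b'_def by (rule W_step) (use i'n ci' bnd[rule_format, of i] bi ai' in \<open>auto\<close>)
      have others: "c j * Phi (a(j := a j + 1)) = 0" if "j \<in> {1..n} - {i, i'}" for j
      proof (rule ccontr)
        assume "c j * Phi (a(j := a j + 1)) \<noteq> 0"
        then have P: "Phi (a(j := a j + 1)) \<noteq> 0" by auto
        have "card (supp (a(j := a j + 1))) = d + 1" using Phi_nz(1)[OF P] unfolding isperm_def by blast
        then have "j \<in> \<sigma>" using card_inc[of j] A \<sigma>_def by (auto split: if_splits)
        then have ss: "supp (a(j := a j + 1)) = \<sigma>" unfolding supp_inc \<sigma>_def by auto
        have "inj_on (a(j := a j + 1)) \<sigma>" using Phi_nz(1)[OF P] ss unfolding isperm_def by auto
        moreover have "(a(j := a j + 1)) i = (a(j := a j + 1)) i'" using that ai' by auto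
        ultimately show False using isig i'(1) ii' unfolding inj_on_def by blast
      qed
      have "(\<Sum>j\<in>{1..n}. c j * Phi (a(j := a j + 1)))
          = (\<Sum>j\<in>{i, i'}. c j * Phi (a(j := a j + 1))) + (\<Sum>j\<in>{1..n} - {i, i'}. c j * Phi (a(j := a j + 1)))"
      proof -
        have sub: "{i, i'} \<subseteq> {1..n}" using i(1) i'n by auto
        show ?thesis using sum.subset_diff[OF sub finite_atLeastAtMost, of "\<lambda>j. c j * Phi (a(j := a j + 1))"]
          by (simp only: add.commute)
      qed
      also have "(\<Sum>j\<in>{1..n} - {i, i'}. c j * Phi (a(j := a j + 1))) = 0"
        using others by (intro sum.neutral) blast
      also have "(\<Sum>j\<in>{i, i'}. c j * Phi (a(j := a j + 1))) = c i * Phi b + c i' * Phi b'"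
        using ii' unfolding b_def b'_def by simp
      also have "c i * Phi b = (-1) ^ invs b * z \<sigma> * (c i * Wt n d c b)"
        using pb(5) sb by simp
      also have "c i' * Phi b' = (-1) ^ invs b' * z \<sigma> * (c i' * Wt n d c b')"
        using Pb' by simp
      finally have X: "(\<Sum>j\<in>{1..n}. c j * Phi (a(j := a j + 1))) =
          (-1) ^ invs b * z \<sigma> * (c i * Wt n d c b) + (-1) ^ invs b' * z \<sigma> * (c i' * Wt n d c b') + 0" .
      have Y: "(-1) ^ invs b * z \<sigma> * (c i * Wt n d c b) + (-1) ^ invs b' * z \<sigma> * (c i' * Wt n d c b') + 0 = (0::'k)"
        unfolding Wi Wi' invsw by simp
      show ?thesis using X Y by (rule trans)
    qed
  next
    case B
    define \<tau> where "\<tau> = supp a"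
    have ft: "finite \<tau>" using fa \<tau>_def by simp
    define cnd where "cnd = ((\<forall>u\<in>\<tau>. 2 \<le> a u \<and> a u \<le> d + 1) \<and> inj_on a \<tau> \<and> S \<subseteq> \<tau> \<and> topS S a)"
    define K where "K = (-1::'k) ^ invs a * Wt n d c a"
    define t where "t = (\<lambda>j. (-1::'k) ^ card {u\<in>\<tau>. u < j} * z (insert j \<tau>))"
    define J0 where "J0 = {j\<in>{1..n}. j \<notin> \<tau> \<and> c j \<noteq> 0}"
    have trm: "c j * Phi (a(j := a j + 1)) = (if j \<in> J0 then (if cnd then K * t j else 0) else 0)"
      if j: "j \<in> {1..n}" for j
    proof (cases "j \<in> J0")
      case False
      show ?thesis
      proof (cases "c j = 0")
        case True then show ?thesis using False by simp
      next
        case cj: False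
        then have "j \<in> \<tau>" using False j unfolding J0_def by auto
        then have "card (supp (a(j := a j + 1))) = d" using card_inc[of j] B \<tau>_def by simp
        then have "Phi (a(j := a j + 1)) = 0" unfolding Phi_def isperm_def by auto
        then show ?thesis using False by simp
      qed
    next
      case True
      then have jt: "j \<notin> \<tau>" and cj: "c j \<noteq> 0" unfolding J0_def by auto
      have jS: "j \<notin> S" using SZ cj by auto
      have aj: "a j = 0" using jt unfolding \<tau>_def supp_def by simp
      have inc: "a(j := a j + 1) = a(j := 1)" using aj by simp
      have sj: "supp (a(j := 1)) = insert j \<tau>" unfolding \<tau>_def supp_def by auto
      have pos: "\<forall>u\<in>\<tau>. 1 \<le> a u" unfolding \<tau>_def supp_def by auto
      have equiv: "(isperm d (a(j := 1)) \<and> S \<subseteq> supp (a(j := 1)) \<and> topS S (a(j := 1))) \<longleftrightarrow> cnd"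
      proof
        assume H: "isperm d (a(j := 1)) \<and> S \<subseteq> supp (a(j := 1)) \<and> topS S (a(j := 1))"
        have inj1: "inj_on (a(j := 1)) (insert j \<tau>)" using H sj unfolding isperm_def by simp
        have injt: "inj_on a \<tau>"
        proof -
          have "inj_on (a(j := 1)) \<tau>" using inj1 by (rule inj_on_subset) auto
          moreover have "inj_on (a(j := 1)) \<tau> = inj_on a \<tau>" using jt by (intro inj_on_cong) auto
          ultimately show ?thesis by simp
        qed
        have ne1: "a u \<noteq> 1" if "u \<in> \<tau>" for u
        proof
          assume "a u = 1"
          then have "(a(j := 1)) u = (a(j := 1)) j" using that jt by auto
          then show False using inj1 that jt unfolding inj_on_def by blast
        qed
        have bd: "a u \<le> d + 1" for u
        proof -
          have "(a(j := 1)) u \<le> d + 1" using H unfolding isperm_def by blast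
          then show ?thesis using aj by (cases "u = j") auto
        qed
        have St: "S \<subseteq> \<tau>" using H sj jS by auto
        have top: "topS S a"
          unfolding topS_def
        proof (intro ballI allI impI)
          fix k u assume k: "k \<in> S" and u: "a u \<noteq> 0" "u \<notin> S"
          have uj: "u \<noteq> j" using u aj by auto
          have kj: "k \<noteq> j" using k jS by auto
          have t: "topS S (a(j := 1))" using H by blast
          have "(a(j := 1)) u \<noteq> 0" using uj u(1) by simp
          then have "(a(j := 1)) u < (a(j := 1)) k" using t k u(2) unfolding topS_def by blast
          then show "a u < a k" using uj kj by simp
        qed
        have rng: "\<forall>u\<in>\<tau>. 2 \<le> a u \<and> a u \<le> d + 1"
        proof
          fix u assume u: "u \<in> \<tau>"
          then have "1 \<le> a u" "a u \<noteq> 1" using pos ne1 by auto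
          then show "2 \<le> a u \<and> a u \<le> d + 1" using bd[of u] by linarith
        qed
        show cnd unfolding cnd_def using rng injt St top by blast
      next
        assume cd: cnd
        have injt: "inj_on (a(j := 1)) \<tau>"
        proof -
          have "inj_on a \<tau>" using cd unfolding cnd_def by blast
          moreover have "inj_on (a(j := 1)) \<tau> = inj_on a \<tau>" using jt by (intro inj_on_cong) auto
          ultimately show ?thesis by simp
        qed
        have nj: "(a(j := 1)) j \<notin> (a(j := 1)) ` (\<tau> - {j})"
        proof
          assume "(a(j := 1)) j \<in> (a(j := 1)) ` (\<tau> - {j})"
          then obtain u where u: "u \<in> \<tau>" "u \<noteq> j" "(a(j := 1)) j = (a(j := 1)) u" by blast
          then have "a u = 1" by simp
          moreover have "2 \<le> a u" using cd u(1) unfolding cnd_def by blast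
          ultimately show False by simp
        qed
        have inj1: "inj_on (a(j := 1)) (insert j \<tau>)"
          using injt nj inj_on_insert by blast
        have card1: "card (supp (a(j := 1))) = d + 1" using sj ft jt B \<tau>_def by simp
        have bd: "\<forall>u. (a(j := 1)) u \<le> d + 1"
        proof
          fix u show "(a(j := 1)) u \<le> d + 1"
          proof (cases "u \<in> \<tau>")
            case True then show ?thesis using cd jt unfolding cnd_def by auto
          next
            case False then have "a u = 0" unfolding \<tau>_def supp_def by simp
            then show ?thesis by simp
          qed
        qed
        have St: "S \<subseteq> supp (a(j := 1))" using cd sj unfolding cnd_def by auto
        have top: "topS S (a(j := 1))"
          unfolding topS_def
        proof (intro ballI allI impI)
          fix k u assume k: "k \<in> S" and u: "(a(j := 1)) u \<noteq> 0" "u \<notin> S"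
          have kj: "k \<noteq> j" using k jS by auto
          have kt: "k \<in> \<tau>" using cd k unfolding cnd_def by auto
          show "(a(j := 1)) u < (a(j := 1)) k"
          proof (cases "u = j")
            case True then show ?thesis using kj kt cd unfolding cnd_def by fastforce
          next
            case False then show ?thesis using kj cd k u unfolding cnd_def topS_def by auto
          qed
        qed
        show "isperm d (a(j := 1)) \<and> S \<subseteq> supp (a(j := 1)) \<and> topS S (a(j := 1))"
          unfolding isperm_def using sj ft inj1 card1 bd St top by auto
      qed
      show ?thesis
      proof (cases cnd)
        case False
        then have "Phi (a(j := a j + 1)) = 0" unfolding inc Phi_def using equiv by auto
        then show ?thesis using False by simp
      next
        case True
        have big: "\<forall>u\<in>supp a. 2 \<le> a u" using True unfolding cnd_def \<tau>_def by auto
        have ninv: "invs (a(j := 1)) = invs a + card {u\<in>\<tau>. u < j}"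
          unfolding \<tau>_def by (rule new_invs) (use fa jt big \<tau>_def in auto)
        have W: "c j * Wt n d c (a(j := 1)) = Wt n d c a"
          using W_step[of j n c a d] j cj aj by simp
        have "Phi (a(j := 1)) = (-1) ^ invs (a(j := 1)) * z (insert j \<tau>) * Wt n d c (a(j := 1))"
          unfolding Phi_def using equiv True sj by simp
        then have "c j * Phi (a(j := 1)) = (-1) ^ (invs a + card {u\<in>\<tau>. u < j}) * z (insert j \<tau>) * (c j * Wt n d c (a(j := 1)))"
          using ninv by (simp add: algebra_simps)
        also have "\<dots> = K * t j" unfolding W K_def t_def by (simp add: power_add algebra_simps)
        finally show ?thesis using True \<open>j \<in> J0\<close> inc by simp
      qed
    qed
    have "(\<Sum>j\<in>{1..n}. c j * Phi (a(j := a j + 1))) = (\<Sum>j\<in>{1..n}. if j \<in> J0 then (if cnd then K * t j else 0) else 0)"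
      using trm by (intro sum.cong) auto
    also have "\<dots> = (\<Sum>j\<in>J0. if cnd then K * t j else 0)"
      unfolding J0_def by (simp add: sum.inter_filter[symmetric])
    also have "\<dots> = 0"
    proof (cases cnd)
      case False then show ?thesis by simp
    next
      case True
      have St: "S \<subseteq> \<tau>" using True unfolding cnd_def by auto
      define V where "V = {v. v \<notin> \<tau> \<and> insert v \<tau> \<in> cplx n d F}"
      have tY: "\<tau> \<in> cplx n d F" using sa B \<tau>_def unfolding cplx_def by auto
      have bd0: "boundary (cplx n d F) d z \<tau> = 0" using zb by simp
      then have sV: "(\<Sum>v\<in>V. t v) = 0"
        using tY B \<tau>_def unfolding boundary_def V_def t_def by simp
      have Vsub: "V \<subseteq> {1..n}" unfolding V_def using F
        unfolding cplx_def d_faces_def by auto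
      have "(\<Sum>j\<in>J0. t j) = (\<Sum>v\<in>V. t v)"
      proof (rule sum.mono_neutral_cong)
        show "finite J0" unfolding J0_def by simp
        show "finite V" using Vsub by (rule finite_subset) simp
        show "t v = 0" if v: "v \<in> V - J0" for v
        proof -
          have vn: "v \<in> {1..n}" "v \<notin> \<tau>" using v Vsub unfolding V_def by auto
          then have cv: "c v = 0" using v unfolding J0_def by auto
          have "z (insert v \<tau>) = 0"
          proof (rule ccontr)
            assume "z (insert v \<tau>) \<noteq> 0"
            moreover have "v \<notin> S" using vn St by auto
            ultimately show False using Smax[of v "insert v \<tau>"] vn cv St by auto
          qed
          then show "t v = 0" unfolding t_def by simp
        qed
        show "t j = 0" if j: "j \<in> J0 - V" for j
        proof -
          have "insert j \<tau> \<notin> cplx n d F" using j unfolding V_def J0_def by auto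
          then have "z (insert j \<tau>) = 0" using zch unfolding chains_def by blast
          then show "t j = 0" unfolding t_def by simp
        qed
      qed simp
      then show ?thesis using True sV by (simp add: sum_distrib_left[symmetric])
    qed
    finally show ?thesis .
  qed
qed

end

lemma gauss2: "2 * (\<Sum>v\<in>{1..k}. v) = k * (k + 1)" for k :: nat
  by (induction k) (auto simp: algebra_simps)

lemma finite_SR: "Y \<subseteq> Pow {1..n} \<Longrightarrow> finite (SR_basis n (h+1) Y i)"
proof -
  assume Y: "Y \<subseteq> Pow {1..n}"
  have fY: "finite Y" using Y by (meson finite_Pow_iff finite_atLeastAtMost finite_subset)
  have "\<forall>\<sigma>\<in>Y. finite (Vs h \<sigma> (int i))" using Y card_Vs by (meson PowD finite_atLeastAtMost finite_subset subsetD)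
  then show ?thesis unfolding SR_eq_Vs[OF Y] using fY by blast
qed

context cyc
begin

lemma Phi_in_SR:
  assumes m: "2 * m = (d + 1) * (d + 2)" and P: "Phi b \<noteq> 0"
  shows "b \<in> SR_basis n (d+2) (cplx n d F) m"
proof -
  define \<sigma> where "\<sigma> = supp b"
  have pb: "isperm d b" "z \<sigma> \<noteq> 0" using Phi_nz[OF P] \<sigma>_def by auto
  have sF: "\<sigma> \<in> F" "\<sigma> \<subseteq> {1..n}" "card \<sigma> = d + 1" using z_nz[OF pb(2)] by auto
  have fs: "finite \<sigma>" using sF(2) by (rule finite_subset) simp
  have injb: "inj_on b \<sigma>" and bnd: "\<forall>j. b j \<le> d + 1" using pb(1) \<sigma>_def unfolding isperm_def by auto
  have img: "b ` \<sigma> = {1..d+1}"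
  proof (rule card_subset_eq)
    show "finite {1..d+1}" by simp
    show "b ` \<sigma> \<subseteq> {1..d+1}" using bnd unfolding \<sigma>_def supp_def by (auto simp: Suc_le_eq)
    show "card (b ` \<sigma>) = card {1..d+1}" using card_image[OF injb] sF(3) by simp
  qed
  have out: "\<forall>j. j \<notin> {1..n} \<longrightarrow> b j = 0" using sF(2) unfolding \<sigma>_def supp_def by auto
  have "(\<Sum>j\<in>{1..n}. b j) = (\<Sum>j\<in>\<sigma>. b j)"
    using sF(2) by (intro sum.mono_neutral_right) (auto simp: \<sigma>_def supp_def)
  also have "\<dots> = (\<Sum>v\<in>b ` \<sigma>. v)" using sum.reindex[OF injb, of "\<lambda>v. v"] by simp
  also have "\<dots> = m" unfolding img using gauss2[of "d+1"] m by simp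
  finally have sm: "(\<Sum>j\<in>{1..n}. b j) = m" .
  have lt: "\<forall>j. b j < d + 2" using bnd by (simp add: less_Suc_eq_le)
  have "{j. b j \<noteq> 0} \<in> cplx n d F" using sF(1) unfolding cplx_def \<sigma>_def supp_def by simp
  then show ?thesis unfolding SR_basis_def using out lt sm by simp
qed

lemma witness:
  assumes z0: "z \<sigma>0 \<noteq> 0" and S0: "S \<subseteq> \<sigma>0"
  shows "\<exists>a0. Phi a0 \<noteq> 0"
proof -
  have sF: "\<sigma>0 \<subseteq> {1..n}" "card \<sigma>0 = d + 1" using z_nz[OF z0] by auto
  have fs: "finite \<sigma>0" using sF(1) by (rule finite_subset) simp
  define rel where "rel = (\<lambda>u v. (u \<notin> S \<and> v \<in> S) \<or> ((u \<in> S \<longleftrightarrow> v \<in> S) \<and> u < v))"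
  have rtrans: "rel u w" if "rel u v" "rel v w" for u v w using that unfolding rel_def by auto
  have rirr: "\<not> rel u u" for u unfolding rel_def by auto
  have rtot: "rel u v \<or> rel v u" if "u \<noteq> v" for u v using that unfolding rel_def by auto
  define a0 where "a0 = (\<lambda>j. if j \<in> \<sigma>0 then Suc (card {u\<in>\<sigma>0. rel u j}) else 0)"
  have sa0: "supp a0 = \<sigma>0" unfolding supp_def a0_def by auto
  have mono: "a0 j < a0 k" if "j \<in> \<sigma>0" "k \<in> \<sigma>0" "rel j k" for j k
  proof -
    have "{u\<in>\<sigma>0. rel u j} \<subset> {u\<in>\<sigma>0. rel u k}"
    proof
      show "{u\<in>\<sigma>0. rel u j} \<subseteq> {u\<in>\<sigma>0. rel u k}" using rtrans that(3) by blast
      show "{u\<in>\<sigma>0. rel u j} \<noteq> {u\<in>\<sigma>0. rel u k}" using that rirr by blast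
    qed
    then have "card {u\<in>\<sigma>0. rel u j} < card {u\<in>\<sigma>0. rel u k}"
      by (rule psubset_card_mono[rotated]) (use fs in simp)
    then show ?thesis using that unfolding a0_def by simp
  qed
  have inj: "inj_on a0 \<sigma>0"
  proof (rule inj_onI)
    fix j k assume jk: "j \<in> \<sigma>0" "k \<in> \<sigma>0" "a0 j = a0 k"
    show "j = k"
    proof (rule ccontr)
      assume "j \<noteq> k"
      then have "rel j k \<or> rel k j" by (rule rtot)
      then show False using mono jk by fastforce
    qed
  qed
  have bnd: "\<forall>j. a0 j \<le> d + 1"
  proof
    fix j show "a0 j \<le> d + 1"
    proof (cases "j \<in> \<sigma>0")
      case True
      have "{u\<in>\<sigma>0. rel u j} \<subseteq> \<sigma>0 - {j}" using rirr by auto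
      then have "card {u\<in>\<sigma>0. rel u j} \<le> card (\<sigma>0 - {j})" using fs by (intro card_mono) auto
      also have "\<dots> = d" using True sF(2) fs by simp
      finally show ?thesis using True unfolding a0_def by simp
    qed (simp add: a0_def)
  qed
  have ip: "isperm d a0" unfolding isperm_def sa0 using fs sF(2) inj bnd by simp
  have tp: "topS S a0"
    unfolding topS_def
  proof (intro ballI allI impI)
    fix k j assume k: "k \<in> S" and j: "a0 j \<noteq> 0" "j \<notin> S"
    have "j \<in> \<sigma>0" using j(1) unfolding a0_def by (auto split: if_splits)
    moreover have "k \<in> \<sigma>0" using k S0 by auto
    moreover have "rel j k" using k j(2) unfolding rel_def by simp
    ultimately show "a0 j < a0 k" by (rule mono)
  qed
  have "Phi a0 = (-1) ^ invs a0 * z \<sigma>0 * Wt n d c a0"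
    unfolding Phi_def using ip tp S0 sa0 by simp
  also have "\<dots> \<noteq> 0" using z0 Wt_nz[of n d c a0] by simp
  finally show ?thesis by blast
qed

lemma orth_full:
  assumes m: "2 * m = (d + 1) * (d + 2)" and m1: "1 \<le> m"
    and f: "f \<in> elem_space TYPE('k) n (d+2) (cplx n d F) (m - 1)"
  shows "(\<Sum>b\<in>SR_basis n (d+2) (cplx n d F) (m - 1 + 1). Phi b * mult_lin n (d+2) (cplx n d F) (m - 1) c f b) = 0"
proof -
  let ?Y = "cplx n d F"
  let ?S = "SR_basis n (d+2) ?Y (m - 1)"
  let ?T = "SR_basis n (d+2) ?Y (m - 1 + 1)"
  have Ysub: "?Y \<subseteq> Pow {1..n}" using F by (rule cplx_sub)
  have fS: "finite ?S" and fT: "finite ?T" using finite_SR[OF Ysub, of "d+1"] by (simp_all add: numeral_2_eq_2)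
  have mm: "m - 1 + 1 = m" using m1 by simp
  have fz: "f a = 0" if "a \<notin> ?S" for a using f that unfolding elem_space_def by blast
  have step1: "Phi b * mult_lin n (d+2) ?Y (m - 1) c f b =
      (\<Sum>j\<in>{1..n}. if 0 < b j then Phi b * (c j * f (b(j := b j - 1))) else 0)" if b: "b \<in> ?T" for b
  proof -
    have "mult_lin n (d+2) ?Y (m - 1) c f b = (\<Sum>j\<in>{j\<in>{1..n}. 0 < b j}.
        if b(j := b j - 1) \<in> ?S then c j * f (b(j := b j - 1)) else 0)"
      using b by (simp add: mult_lin_def)
    also have "\<dots> = (\<Sum>j\<in>{j\<in>{1..n}. 0 < b j}. c j * f (b(j := b j - 1)))"
      using fz by (intro sum.cong) auto
    also have "\<dots> = (\<Sum>j\<in>{1..n}. if 0 < b j then c j * f (b(j := b j - 1)) else 0)"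
      by (rule sum.inter_filter) simp
    finally have E: "mult_lin n (d+2) ?Y (m - 1) c f b = (\<Sum>j\<in>{1..n}. if 0 < b j then c j * f (b(j := b j - 1)) else 0)" .
    have "Phi b * mult_lin n (d+2) ?Y (m - 1) c f b = (\<Sum>j\<in>{1..n}. Phi b * (if 0 < b j then c j * f (b(j := b j - 1)) else 0))"
      unfolding E by (rule sum_distrib_left)
    also have "\<dots> = (\<Sum>j\<in>{1..n}. if 0 < b j then Phi b * (c j * f (b(j := b j - 1))) else 0)"
      by (rule sum.cong) simp_all
    finally show ?thesis .
  qed
  have step3: "(\<Sum>b\<in>?T. if 0 < b j then Phi b * (c j * f (b(j := b j - 1))) else 0)
      = (\<Sum>a\<in>?S. Phi (a(j := a j + 1)) * (c j * f a))" for j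
  proof -
    define inc where "inc = (\<lambda>a::nat\<Rightarrow>nat. a(j := a j + 1))"
    have injinc: "inj_on inc ?S"
    proof (rule inj_onI)
      fix x y assume "inc x = inc y"
      then have "x j = y j" and "\<forall>k. k \<noteq> j \<longrightarrow> x k = y k" unfolding inc_def
        by (metis add_right_cancel fun_upd_same, metis fun_upd_other)
      then show "x = y" by (metis ext)
    qed
    have bck: "(inc a)(j := inc a j - 1) = a" for a unfolding inc_def by simp
    have "(\<Sum>a\<in>?S. Phi (a(j := a j + 1)) * (c j * f a)) = (\<Sum>b\<in>inc ` ?S. Phi b * (c j * f (b(j := b j - 1))))"
      using sum.reindex[OF injinc, of "\<lambda>b. Phi b * (c j * f (b(j := b j - 1)))"] bck
      by (simp add: inc_def)
    also have "\<dots> = (\<Sum>b\<in>?T. if 0 < b j then Phi b * (c j * f (b(j := b j - 1))) else 0)"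
    proof (rule sum.mono_neutral_cong)
      show "finite (inc ` ?S)" using fS by simp
      show "finite ?T" by (rule fT)
      show "(if 0 < b j then Phi b * (c j * f (b(j := b j - 1))) else 0) = 0" if "b \<in> ?T - inc ` ?S" for b
      proof (cases "0 < b j")
        case True
        have "b(j := b j - 1) \<notin> ?S"
        proof
          assume "b(j := b j - 1) \<in> ?S"
          moreover have "inc (b(j := b j - 1)) = b" unfolding inc_def using True by (auto simp: fun_eq_iff)
          ultimately show False using that by (metis DiffD2 imageI)
        qed
        then show ?thesis using fz by simp
      qed simp
      show "Phi b * (c j * f (b(j := b j - 1))) = 0" if "b \<in> inc ` ?S - ?T" for b
      proof -
        have "Phi b = 0" using Phi_in_SR[OF m] that mm by auto
        then show ?thesis by simp
      qed
      show "Phi b * (c j * f (b(j := b j - 1))) = (if 0 < b j then Phi b * (c j * f (b(j := b j - 1))) else 0)"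
        if "b \<in> inc ` ?S \<inter> ?T" for b
        using that unfolding inc_def by auto
    qed
    finally show ?thesis by simp
  qed
  have "(\<Sum>b\<in>?T. Phi b * mult_lin n (d+2) ?Y (m - 1) c f b)
      = (\<Sum>b\<in>?T. \<Sum>j\<in>{1..n}. if 0 < b j then Phi b * (c j * f (b(j := b j - 1))) else 0)"
    using step1 by (rule sum.cong[OF refl])
  also have "\<dots> = (\<Sum>j\<in>{1..n}. \<Sum>b\<in>?T. if 0 < b j then Phi b * (c j * f (b(j := b j - 1))) else 0)"
    by (rule sum.swap)
  also have "\<dots> = (\<Sum>j\<in>{1..n}. \<Sum>a\<in>?S. Phi (a(j := a j + 1)) * (c j * f a))"
    using step3 by simp
  also have "\<dots> = (\<Sum>a\<in>?S. \<Sum>j\<in>{1..n}. Phi (a(j := a j + 1)) * (c j * f a))"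
    by (rule sum.swap)
  also have "\<dots> = (\<Sum>a\<in>?S. f a * (\<Sum>j\<in>{1..n}. c j * Phi (a(j := a j + 1))))"
    by (simp add: sum_distrib_left algebra_simps)
  also have "\<dots> = 0"
  proof (rule sum.neutral, rule ballI)
    fix a assume a: "a \<in> ?S"
    have "supp a \<subseteq> {1..n}" using a unfolding SR_basis_def supp_def by auto
    then show "f a * (\<Sum>j\<in>{1..n}. c j * Phi (a(j := a j + 1))) = 0" using orth_pt by simp
  qed
  finally show ?thesis .
qed

lemma top_ge:
  assumes a: "a \<in> SR_basis n (d+2) (cplx n d F) m"
  shows "m \<le> top_deg n (d+2) (cplx n d F)"
proof -
  let ?I = "{i. SR_basis n (d+2) (cplx n d F) i \<noteq> {}}"
  have "?I \<subseteq> {0..n * (d + 2)}"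
  proof
    fix i assume "i \<in> ?I"
    then obtain b where b: "b \<in> SR_basis n (d+2) (cplx n d F) i" by blast
    then have "i = (\<Sum>j\<in>{1..n}. b j)" and lt: "\<forall>j. b j < d + 2" unfolding SR_basis_def by auto
    moreover have "(\<Sum>j\<in>{1..n}. b j) \<le> (\<Sum>j\<in>{1..n}. d + 2)" using lt by (intro sum_mono) (simp add: less_imp_le)
    ultimately show "i \<in> {0..n * (d + 2)}" by simp
  qed
  then have "finite ?I" by (rule finite_subset) simp
  moreover have "m \<in> ?I" using a by blast
  ultimately show ?thesis unfolding top_deg_def by (rule Max_ge)
qed

lemma no_full_rank:
  assumes d1: "1 \<le> d" and nd: "n \<le> 2 * d + 1" and z0: "z \<sigma>0 \<noteq> 0" and S0: "S \<subseteq> \<sigma>0"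
    and m: "2 * m = (d + 1) * (d + 2)"
  shows "\<not> full_rank_mult TYPE('k) n (d+2) (cplx n d F) (m - 1) c \<and> m - 1 < top_deg n (d+2) (cplx n d F)"
proof -
  have m1: "1 \<le> m" using m d1 by (cases m) auto
  have mm: "m - 1 + 1 = m" using m1 by simp
  have Ysub: "cplx n d F \<subseteq> Pow {1..n}" using F by (rule cplx_sub)
  have fin: "finite (SR_basis n (d+2) (cplx n d F) i)" for i
    using finite_SR[OF Ysub, of "d+1"] by (simp add: numeral_2_eq_2)
  obtain a0 where a0: "Phi a0 \<noteq> 0" using witness[OF z0 S0] by blast
  have a0S: "a0 \<in> SR_basis n (d+2) (cplx n d F) m" by (rule Phi_in_SR[OF m a0])
  have card: "card (SR_basis n (d+2) (cplx n d F) (m - 1 + 1)) \<le> card (SR_basis n (d+2) (cplx n d F) (m - 1))"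
    unfolding mm by (rule count_ineq[OF F d1 nd m])
  have "\<not> full_rank_mult TYPE('k) n (d+2) (cplx n d F) (m - 1) c"
    by (rule not_full_rank[where n=n and e="d+2" and Y="cplx n d F" and i="m-1" and Phi=Phi and c=c,
          OF fin fin card _ a0]) (use a0S mm orth_full[OF m m1] in auto)
  moreover have "m - 1 < top_deg n (d+2) (cplx n d F)" using top_ge[OF a0S] m1 by simp
  ultimately show ?thesis by blast
qed

end

lemma hom_no_WLP:
  fixes F :: "nat set set"
  assumes F: "F \<subseteq> d_faces n d" and d1: "1 \<le> d" and nd: "n \<le> 2 * d + 1"
    and H: "reduced_homology_nonzero TYPE('k::field) (cplx n d F) d"
  shows "\<not> has_WLP TYPE('k) n (d+2) (cplx n d F)"
proof
  assume W: "has_WLP TYPE('k) n (d+2) (cplx n d F)"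
  then obtain c :: "nat \<Rightarrow> 'k" where c: "\<forall>i < top_deg n (d+2) (cplx n d F). full_rank_mult TYPE('k) n (d+2) (cplx n d F) i c"
    unfolding has_WLP_def by blast
  obtain z :: "nat set \<Rightarrow> 'k" where zc: "z \<in> chains TYPE('k) (cplx n d F) d" and zb: "boundary (cplx n d F) d z = (\<lambda>_. 0)"
    and nb: "\<not> (\<exists>w\<in>chains TYPE('k) (cplx n d F) (d + 1). boundary (cplx n d F) (d + 1) w = z)"
    using H unfolding reduced_homology_nonzero_def by blast
  have "z \<noteq> (\<lambda>_. 0)"
  proof
    assume z0: "z = (\<lambda>_. 0)"
    have "(\<lambda>_. 0) \<in> chains TYPE('k) (cplx n d F) (d + 1)" unfolding chains_def by simp
    moreover have "boundary (cplx n d F) (d + 1) (\<lambda>_. 0 :: 'k) = (\<lambda>_. 0)" unfolding boundary_def by (simp add: fun_eq_iff)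
    ultimately show False using nb z0 by blast
  qed
  then obtain \<sigma>1 where s1: "z \<sigma>1 \<noteq> 0" by (auto simp: fun_eq_iff)
  define Fam where "Fam = {T. T \<subseteq> {k\<in>{1..n}. c k = 0} \<and> (\<exists>\<sigma>. z \<sigma> \<noteq> 0 \<and> T \<subseteq> \<sigma>)}"
  have fFam: "finite Fam" unfolding Fam_def by (rule finite_subset[of _ "Pow {k\<in>{1..n}. c k = 0}"]) auto
  have eFam: "{} \<in> Fam" unfolding Fam_def using s1 by auto
  define M where "M = Max (card ` Fam)"
  have "M \<in> card ` Fam" unfolding M_def using fFam eFam by (intro Max_in) auto
  then obtain S where SF: "S \<in> Fam" and SM: "card S = M" by auto
  have Sle: "card T \<le> card S" if "T \<in> Fam" for T
    using SM that fFam unfolding M_def by simp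
  obtain \<sigma>0 where z0: "z \<sigma>0 \<noteq> 0" and S0: "S \<subseteq> \<sigma>0" using SF unfolding Fam_def by blast
  have SZ: "\<forall>k\<in>S. k \<in> {1..n} \<and> c k = 0" using SF unfolding Fam_def by auto
  have fSs: "finite S" using SZ by (metis finite_atLeastAtMost finite_subset subsetI)
  have Smax: "\<not> insert k S \<subseteq> \<sigma>" if "k \<in> {1..n}" "c k = 0" "k \<notin> S" "z \<sigma> \<noteq> 0" for k \<sigma>
  proof
    assume "insert k S \<subseteq> \<sigma>"
    then have "insert k S \<in> Fam" using that SZ unfolding Fam_def by auto
    then have "card (insert k S) \<le> card S" by (rule Sle)
    then show False using fSs that(3) by simp
  qed
  interpret cyc n d F c z S
    by unfold_locales (use F zc zb SZ Smax in auto)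
  define m where "m = (d + 1) * (d + 2) div 2"
  have m: "2 * m = (d + 1) * (d + 2)" unfolding m_def by simp
  have "\<not> full_rank_mult TYPE('k) n (d+2) (cplx n d F) (m - 1) c \<and> m - 1 < top_deg n (d+2) (cplx n d F)"
    by (rule no_full_rank[OF d1 nd z0 S0 m])
  then show False using c by blast
qed

theorem theorem7p3:
  fixes s p :: real and n d :: nat
  assumes "1/2 \<le> s" and "s < 1" and "d = nat \<lceil>s * real n\<rceil>" and "d < n"
    and "0 < p" and "p < 1"
  shows "Yprob n d p (\<lambda>Y. \<not> has_WLP TYPE('k::field) n (d + 2) Y)
           \<ge> Yprob n d p (\<lambda>Y. reduced_homology_nonzero TYPE('k) Y d)"
proof -
  have n1: "1 \<le> n" using assms(4) by simp
  have sn: "real n / 2 \<le> s * real n"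
    using mult_right_mono[OF assms(1), of "real n"] by simp
  have pos: "0 < s * real n" using sn n1 by simp
  have cge: "s * real n \<le> real_of_int \<lceil>s * real n\<rceil>" by (rule le_of_int_ceiling)
  have c1: "1 \<le> \<lceil>s * real n\<rceil>" using pos cge by linarith
  have rd: "real d = real_of_int \<lceil>s * real n\<rceil>" using assms(3) c1 by simp
  have d1: "1 \<le> d" using assms(3) c1 by linarith
  have nd: "n \<le> 2 * d + 1" using rd cge sn by linarith
  show ?thesis
    unfolding Yprob_def
  proof (rule sum_mono)
    fix F assume F: "F \<in> Pow (d_faces n d)"
    let ?w = "p ^ card F * (1 - p) ^ (card (d_faces n d) - card F)"
    have w0: "0 \<le> ?w" using assms(5,6) by simp
    show "(if reduced_homology_nonzero TYPE('k) (cplx n d F) d then ?w else 0)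
        \<le> (if \<not> has_WLP TYPE('k) n (d + 2) (cplx n d F) then ?w else 0)"
      using hom_no_WLP[of F n d, where 'k='k] F d1 nd w0 by auto
  qed
qed

end
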